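(* For every set of formulas $\Gamma$ and formula $\alpha$: $\Gamma\vdash_{LFI3}\alpha$ (derivability in the Hilbert calculus LFI3) if and only if $\Gamma\vDash_{LFI3}\alpha$ (consequence in the five-valued LFI3 matrix).
   Context: Formulas are built from a countable set of propositional variables using unary $\neg,\circ$ and binary $\land,\lor,\to$; $\alpha\leftrightarrow\beta:=(\alpha\to\beta)\land(\beta\to\alpha)$, $\sim\alpha:=\neg\alpha\land\circ\alpha$. mbC is the Hilbert calculus with the axiom schemas of a standard axiomatization of positive classical propositional logic in $\land,\lor,\to$, plus $\alpha\lor\neg\alpha$ and $\circ\alpha\to(\alpha\to(\neg\alpha\to\beta))$, with modus ponens as only rule. The Hilbert calculus LFI3 is mbC plus the schemas $\circ\alpha\lor(\alpha\land\neg\alpha)$, $\circ\circ\circ\alpha$, $\neg\neg\alpha\to\alpha$, $\alpha\to\neg\neg\alpha$, $\neg\circ\neg\alpha\leftrightarrow\neg\circ\alpha$, and: A1 $\neg(\alpha\land\beta)\leftrightarrow(\neg\alpha\lor\neg\beta)$; A2 $\neg(\alpha\lor\beta)\leftrightarrow(\neg\alpha\land\neg\beta)$; A3 $\neg(\alpha\to\beta)\leftrightarrow(\neg\beta\land(\sim\neg\alpha\lor\neg\circ\alpha))$; A4 $\neg\circ(\alpha\land\beta)\leftrightarrow(((\sim\neg\alpha\land\neg\circ\beta)\lor(\neg\circ\alpha\land\sim\neg\beta))\lor(\neg\circ\alpha\land\neg\circ\beta))$; A5 $\neg\circ(\alpha\lor\beta)\leftrightarrow(((\sim\alpha\land\neg\circ\beta)\lor(\neg\circ\alpha\land\sim\beta))\lor(\neg\circ\alpha\land\neg\circ\beta))$;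 A6 $\neg\circ(\alpha\to\beta)\leftrightarrow((\sim\neg\alpha\land\neg\circ\beta)\lor(\sim\neg\alpha\land\neg\circ\alpha\land\sim\beta)\lor(\neg\circ\alpha\land\neg\circ\beta)\lor(\sim\alpha\land\neg\circ\alpha\land\sim\beta))$. Semantics: on $\{0,1\}$ use Boolean $\land,\lor,\to,\sim$. Let $\mathbb{B}=\{x\in\{0,1\}^3: x_1\lor x_2=1,\ x_3\lor\sim(x_1\land x_2)=1\}$ (five elements). The LFI3 algebra on $\mathbb{B}$: $a\dot\land b=(a_1\land b_1,\ a_2\lor b_2,\ (\sim a_2\land b_3)\lor(a_3\land\sim b_2)\lor(a_3\land b_3))$; $a\dot\lor b=(a_1\lor b_1,\ a_2\land b_2,\ (\sim a_1\land b_3)\lor(a_3\land\sim b_1)\lor(a_3\land b_3))$; $a\dot\to b=(a_1\to b_1,\ b_2\land(\sim a_2\lor a_3),\ (\sim a_2\land b_3)\lor(\sim a_2\land a_3\land\sim b_1)\lor(a_3\land b_3)\lor(\sim a_1\land a_3\land\sim b_1))$; $\dot\neg a=(a_2,a_1,a_3)$; $\dot\circ a=(\sim(a_1\land a_2),a_3,a_3\land\sim(a_1\land a_2))$. Designated set $D=\{x:x_1=1\}$. $\Gamma\vDash_{LFI3}\alpha$ iff every homomorphism $h$ from formulas to this algebra with $h[\Gamma]\subseteq D$ has $h(\alpha)\in D$. *)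

theory Defs
  imports Main
begin

datatype fm =
    Var nat
  | Neg fm
  | Circ fm
  | Conj fm fm
  | Disj fm fm
  | Imp fm fm

definition Iff :: "fm \<Rightarrow> fm \<Rightarrow> fm" where
  "Iff a b = Conj (Imp a b) (Imp b a)"

definition SNeg :: "fm \<Rightarrow> fm" where
  "SNeg a = Conj (Neg a) (Circ a)"

inductive mbC_ax :: "fm \<Rightarrow> bool" where
  ax1: "mbC_ax (Imp a (Imp b a))"
| ax2: "mbC_ax (Imp (Imp a b) (Imp (Imp a (Imp b c)) (Imp a c)))"
| ax3: "mbC_ax (Imp a (Imp b (Conj a b)))"
| ax4: "mbC_ax (Imp (Conj a b) a)"
| ax5: "mbC_ax (Imp (Conj a b) b)"
| ax6: "mbC_ax (Imp a (Disj a b))"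
| ax7: "mbC_ax (Imp b (Disj a b))"
| ax8: "mbC_ax (Imp (Imp a c) (Imp (Imp b c) (Imp (Disj a b) c)))"
| ax9: "mbC_ax (Disj a (Imp a b))"
| ax10: "mbC_ax (Disj a (Neg a))"
| bc1: "mbC_ax (Imp (Circ a) (Imp a (Imp (Neg a) b)))"

inductive LFI3_ax :: "fm \<Rightarrow> bool" where
  mbC: "mbC_ax a \<Longrightarrow> LFI3_ax a"
| ciw: "LFI3_ax (Disj (Circ a) (Conj a (Neg a)))"
| ccc: "LFI3_ax (Circ (Circ (Circ a)))"
| cf: "LFI3_ax (Imp (Neg (Neg a)) a)"
| ce: "LFI3_ax (Imp a (Neg (Neg a)))"
| negcircneg: "LFI3_ax (Iff (Neg (Circ (Neg a))) (Neg (Circ a)))"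
| A1: "LFI3_ax (Iff (Neg (Conj a b)) (Disj (Neg a) (Neg b)))"
| A2: "LFI3_ax (Iff (Neg (Disj a b)) (Conj (Neg a) (Neg b)))"
| A3: "LFI3_ax (Iff (Neg (Imp a b))
          (Conj (Neg b) (Disj (SNeg (Neg a)) (Neg (Circ a)))))"
| A4: "LFI3_ax (Iff (Neg (Circ (Conj a b)))
          (Disj (Disj (Conj (SNeg (Neg a)) (Neg (Circ b)))
                      (Conj (Neg (Circ a)) (SNeg (Neg b))))
                (Conj (Neg (Circ a)) (Neg (Circ b)))))"
| A5: "LFI3_ax (Iff (Neg (Circ (Disj a b)))
          (Disj (Disj (Conj (SNeg a) (Neg (Circ b)))
                      (Conj (Neg (Circ a)) (SNeg b)))
                (Conj (Neg (Circ a)) (Neg (Circ b)))))"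
| A6: "LFI3_ax (Iff (Neg (Circ (Imp a b)))
          (Disj (Disj (Disj
              (Conj (SNeg (Neg a)) (Neg (Circ b)))
              (Conj (Conj (SNeg (Neg a)) (Neg (Circ a))) (SNeg b)))
              (Conj (Neg (Circ a)) (Neg (Circ b))))
              (Conj (Conj (SNeg a) (Neg (Circ a))) (SNeg b))))"

inductive LFI3_derives :: "fm set \<Rightarrow> fm \<Rightarrow> bool" where
  hyp: "a \<in> \<Gamma> \<Longrightarrow> LFI3_derives \<Gamma> a"
| ax: "LFI3_ax a \<Longrightarrow> LFI3_derives \<Gamma> a"
| mp: "LFI3_derives \<Gamma> a \<Longrightarrow> LFI3_derives \<Gamma> (Imp a b) \<Longrightarrow> LFI3_derives \<Gamma> b"

type_synonym tv = "bool \<times> bool \<times> bool"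

definition BB :: "tv set" where
  "BB = {(x1, x2, x3). (x1 \<or> x2) \<and> (x3 \<or> \<not> (x1 \<and> x2))}"

fun t_and :: "tv \<Rightarrow> tv \<Rightarrow> tv" where
  "t_and (a1, a2, a3) (b1, b2, b3) =
     (a1 \<and> b1, a2 \<or> b2,
      (\<not> a2 \<and> b3) \<or> (a3 \<and> \<not> b2) \<or> (a3 \<and> b3))"

fun t_or :: "tv \<Rightarrow> tv \<Rightarrow> tv" where
  "t_or (a1, a2, a3) (b1, b2, b3) =
     (a1 \<or> b1, a2 \<and> b2,
      (\<not> a1 \<and> b3) \<or> (a3 \<and> \<not> b1) \<or> (a3 \<and> b3))"

fun t_imp :: "tv \<Rightarrow> tv \<Rightarrow> tv" where
  "t_imp (a1, a2, a3) (b1, b2, b3) =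
     (a1 \<longrightarrow> b1, b2 \<and> (\<not> a2 \<or> a3),
      (\<not> a2 \<and> b3) \<or> (\<not> a2 \<and> a3 \<and> \<not> b1) \<or> (a3 \<and> b3) \<or> (\<not> a1 \<and> a3 \<and> \<not> b1))"

fun t_neg :: "tv \<Rightarrow> tv" where
  "t_neg (a1, a2, a3) = (a2, a1, a3)"

fun t_circ :: "tv \<Rightarrow> tv" where
  "t_circ (a1, a2, a3) = (\<not> (a1 \<and> a2), a3, a3 \<and> \<not> (a1 \<and> a2))"

definition designated :: "tv set" where
  "designated = {x. fst x}"

text \<open>Homomorphisms from the formula algebra into the LFI3 algebra are exactly the
  extensions of assignments of elements of BB to the variables.\<close>

fun eval :: "(nat \<Rightarrow> tv) \<Rightarrow> fm \<Rightarrow> tv" where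
  "eval v (Var n) = v n"
| "eval v (Neg a) = t_neg (eval v a)"
| "eval v (Circ a) = t_circ (eval v a)"
| "eval v (Conj a b) = t_and (eval v a) (eval v b)"
| "eval v (Disj a b) = t_or (eval v a) (eval v b)"
| "eval v (Imp a b) = t_imp (eval v a) (eval v b)"

definition LFI3_entails :: "fm set \<Rightarrow> fm \<Rightarrow> bool" where
  "LFI3_entails \<Gamma> a \<longleftrightarrow>
     (\<forall>v. (\<forall>n. v n \<in> BB) \<longrightarrow>
        (\<forall>g\<in>\<Gamma>. eval v g \<in> designated) \<longrightarrow> eval v a \<in> designated)"

end

theory Submission
  imports Defs
begin

section \<open>Soundness\<close>

lemma eval_BB: "(\<forall>n. v n \<in> BB) \<Longrightarrow> eval v a \<in> BB"
proof (induction a)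
  case (Var n) then show ?case by simp
next
  case (Neg a) then show ?case by (cases "eval v a") (auto simp: BB_def)
next
  case (Circ a) then show ?case by (cases "eval v a") (auto simp: BB_def)
next
  case (Conj a b) then show ?case
    by (cases "eval v a"; cases "eval v b") (auto simp: BB_def)
next
  case (Disj a b) then show ?case
    by (cases "eval v a"; cases "eval v b") (auto simp: BB_def)
next
  case (Imp a b) then show ?case
    by (cases "eval v a"; cases "eval v b") (auto simp: BB_def)
qed

lemma mbC_sound:
  assumes "mbC_ax f" "\<forall>n. v n \<in> BB"
  shows "fst (eval v f)"
  using assms
proof (induction f rule: mbC_ax.induct)
  case (ax1 a b) then show ?case using eval_BB[of v a] eval_BB[of v b]
    by (cases "eval v a"; cases "eval v b") (auto simp: BB_def)
next
  case (ax2 a b c) then show ?case using eval_BB[of v a] eval_BB[of v b] eval_BB[of v c]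
    by (cases "eval v a"; cases "eval v b"; cases "eval v c") (auto simp: BB_def)
next
  case (ax3 a b) then show ?case using eval_BB[of v a] eval_BB[of v b]
    by (cases "eval v a"; cases "eval v b") (auto simp: BB_def)
next
  case (ax4 a b) then show ?case using eval_BB[of v a] eval_BB[of v b]
    by (cases "eval v a"; cases "eval v b") (auto simp: BB_def)
next
  case (ax5 a b) then show ?case using eval_BB[of v a] eval_BB[of v b]
    by (cases "eval v a"; cases "eval v b") (auto simp: BB_def)
next
  case (ax6 a b) then show ?case using eval_BB[of v a] eval_BB[of v b]
    by (cases "eval v a"; cases "eval v b") (auto simp: BB_def)
next
  case (ax7 b a) then show ?case using eval_BB[of v b] eval_BB[of v a]
    by (cases "eval v b"; cases "eval v a") (auto simp: BB_def)
next
  case (ax8 a c b) then show ?case using eval_BB[of v a] eval_BB[of v c] eval_BB[of v b]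
    by (cases "eval v a"; cases "eval v c"; cases "eval v b") (auto simp: BB_def)
next
  case (ax9 a b) then show ?case using eval_BB[of v a] eval_BB[of v b]
    by (cases "eval v a"; cases "eval v b") (auto simp: BB_def)
next
  case (ax10 a) then show ?case using eval_BB[of v a]
    by (cases "eval v a") (auto simp: BB_def)
next
  case (bc1 a b) then show ?case using eval_BB[of v a] eval_BB[of v b]
    by (cases "eval v a"; cases "eval v b") (auto simp: BB_def)
qed

lemma LFI3_sound:
  assumes "LFI3_ax f" "\<forall>n. v n \<in> BB"
  shows "fst (eval v f)"
  using assms
proof (induction f rule: LFI3_ax.induct)
  case (mbC a) then show ?case using mbC_sound by blast
next
  case (ciw a) then show ?case using eval_BB[of v a]
    by (cases "eval v a") (auto simp: BB_def)
next
  case (ccc a) then show ?case using eval_BB[of v a]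
    by (cases "eval v a") (auto simp: BB_def)
next
  case (cf a) then show ?case using eval_BB[of v a]
    by (cases "eval v a") (auto simp: BB_def)
next
  case (ce a) then show ?case using eval_BB[of v a]
    by (cases "eval v a") (auto simp: BB_def)
next
  case (negcircneg a) then show ?case using eval_BB[of v a]
    by (cases "eval v a") (auto simp: BB_def Iff_def)
next
  case (A1 a b) then show ?case using eval_BB[of v a] eval_BB[of v b]
    by (cases "eval v a"; cases "eval v b") (auto simp: BB_def Iff_def SNeg_def)
next
  case (A2 a b) then show ?case using eval_BB[of v a] eval_BB[of v b]
    by (cases "eval v a"; cases "eval v b") (auto simp: BB_def Iff_def SNeg_def)
next
  case (A3 a b) then show ?case using eval_BB[of v a] eval_BB[of v b]
    by (cases "eval v a"; cases "eval v b") (auto simp: BB_def Iff_def SNeg_def)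
next
  case (A4 a b) then show ?case using eval_BB[of v a] eval_BB[of v b]
    by (cases "eval v a"; cases "eval v b") (auto simp: BB_def Iff_def SNeg_def)
next
  case (A5 a b) then show ?case using eval_BB[of v a] eval_BB[of v b]
    by (cases "eval v a"; cases "eval v b") (auto simp: BB_def Iff_def SNeg_def)
next
  case (A6 a b) then show ?case using eval_BB[of v a] eval_BB[of v b]
    by (cases "eval v a"; cases "eval v b") (auto simp: BB_def Iff_def SNeg_def)
qed

lemma soundness: "LFI3_derives \<Gamma> a \<Longrightarrow> LFI3_entails \<Gamma> a"
proof (induction rule: LFI3_derives.induct)
  case (hyp a \<Gamma>) then show ?case by (auto simp: LFI3_entails_def)
next
  case (ax a \<Gamma>) then show ?case
    using LFI3_sound by (auto simp: LFI3_entails_def designated_def)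
next
  case (mp \<Gamma> a b) then show ?case
    unfolding LFI3_entails_def designated_def
    by (metis (mono_tags) mem_Collect_eq prod_cases3 eval.simps(6) t_imp.simps fst_conv)
qed

section \<open>Deduction theorem and compactness\<close>

lemma deriv_mono: "LFI3_derives \<Gamma> a \<Longrightarrow> \<Gamma> \<subseteq> \<Delta> \<Longrightarrow> LFI3_derives \<Delta> a"
  by (induction rule: LFI3_derives.induct) (auto intro: LFI3_derives.intros)

lemma dax: "mbC_ax a \<Longrightarrow> LFI3_derives \<Gamma> a"
  by (rule LFI3_derives.ax, rule LFI3_ax.mbC)

lemma imp_refl: "LFI3_derives \<Gamma> (Imp a a)"
proof -
  have 1: "LFI3_derives \<Gamma> (Imp (Imp a (Imp a a)) (Imp (Imp a (Imp (Imp a a) a)) (Imp a a)))"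
    by (rule dax, rule mbC_ax.ax2)
  have 2: "LFI3_derives \<Gamma> (Imp a (Imp a a))" by (rule dax, rule mbC_ax.ax1)
  have 3: "LFI3_derives \<Gamma> (Imp a (Imp (Imp a a) a))" by (rule dax, rule mbC_ax.ax1)
  show ?thesis using LFI3_derives.mp[OF 3 LFI3_derives.mp[OF 2 1]] .
qed

lemma deduction: "LFI3_derives (insert a \<Gamma>) b \<Longrightarrow> LFI3_derives \<Gamma> (Imp a b)"
proof (induction "insert a \<Gamma>" b rule: LFI3_derives.induct)
  case (hyp b)
  show ?case
  proof (cases "b = a")
    case True then show ?thesis using imp_refl by simp
  next
    case False
    then have "LFI3_derives \<Gamma> b" using hyp by (auto intro: LFI3_derives.hyp)
    then show ?thesis using LFI3_derives.mp dax mbC_ax.ax1 by blast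
  qed
next
  case (ax b)
  then have "LFI3_derives \<Gamma> b" by (rule LFI3_derives.ax)
  then show ?case using LFI3_derives.mp dax mbC_ax.ax1 by blast
next
  case (mp b c)
  have "LFI3_derives \<Gamma> (Imp (Imp a b) (Imp (Imp a (Imp b c)) (Imp a c)))"
    by (rule dax, rule mbC_ax.ax2)
  then show ?case using mp LFI3_derives.mp by blast
qed

lemma compact: "LFI3_derives \<Gamma> a \<Longrightarrow> \<exists>F. finite F \<and> F \<subseteq> \<Gamma> \<and> LFI3_derives F a"
proof (induction rule: LFI3_derives.induct)
  case (hyp a \<Gamma>)
  then show ?case by (intro exI[of _ "{a}"]) (auto intro: LFI3_derives.hyp)
next
  case (ax a \<Gamma>)
  then show ?case by (intro exI[of _ "{}"]) (auto intro: LFI3_derives.ax)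
next
  case (mp \<Gamma> a b)
  then obtain F1 F2 where "finite F1" "F1 \<subseteq> \<Gamma>" "LFI3_derives F1 a"
    "finite F2" "F2 \<subseteq> \<Gamma>" "LFI3_derives F2 (Imp a b)" by blast
  then show ?case
    by (intro exI[of _ "F1 \<union> F2"]) (meson LFI3_derives.mp deriv_mono finite_UnI le_sup_iff sup_ge1 sup_ge2)
qed

lemma finite_chain_bound:
  assumes "finite F" "F \<subseteq> \<Union>C" "C \<noteq> {}" "\<forall>X\<in>C. \<forall>Y\<in>C. X \<subseteq> Y \<or> Y \<subseteq> X"
  shows "\<exists>X\<in>C. F \<subseteq> X"
  using assms
proof (induction F rule: finite_induct)
  case empty then show ?case by blast
next
  case (insert x F)
  then obtain X where X: "X \<in> C" "F \<subseteq> X" by blast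
  obtain Y where Y: "Y \<in> C" "x \<in> Y" using insert by blast
  show ?case
  proof (cases "X \<subseteq> Y")
    case True then show ?thesis using X Y by blast
  next
    case False then have "Y \<subseteq> X" using insert X Y by blast
    then show ?thesis using X Y by blast
  qed
qed

section \<open>Lindenbaum\<close>

lemma lindenbaum:
  assumes "\<not> LFI3_derives \<Gamma> \<alpha>"
  shows "\<exists>\<Delta>. \<Gamma> \<subseteq> \<Delta> \<and> \<not> LFI3_derives \<Delta> \<alpha> \<and>
     (\<forall>\<phi>. \<phi> \<notin> \<Delta> \<longrightarrow> LFI3_derives (insert \<phi> \<Delta>) \<alpha>)"
proof -
  let ?A = "{\<Delta>. \<Gamma> \<subseteq> \<Delta> \<and> \<not> LFI3_derives \<Delta> \<alpha>}"
  have "\<exists>M\<in>?A. \<forall>X\<in>?A. M \<subseteq> X \<longrightarrow> X = M"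
  proof (rule subset_Zorn_nonempty)
    show "?A \<noteq> {}" using assms by blast
  next
    fix C assume C: "C \<noteq> {}" "subset.chain ?A C"
    have CA: "C \<subseteq> ?A" and ch: "\<forall>X\<in>C. \<forall>Y\<in>C. X \<subseteq> Y \<or> Y \<subseteq> X"
      using C(2) unfolding subset_chain_def by blast+
    have "\<not> LFI3_derives (\<Union>C) \<alpha>"
    proof
      assume "LFI3_derives (\<Union>C) \<alpha>"
      then obtain F where F: "finite F" "F \<subseteq> \<Union>C" "LFI3_derives F \<alpha>"
        using compact by blast
      then obtain X where "X \<in> C" "F \<subseteq> X" using finite_chain_bound[OF F(1) F(2) C(1) ch] by (elim bexE)
      then have "LFI3_derives X \<alpha>" using F(3) deriv_mono by metis
      moreover have "X \<in> ?A" using CA \<open>X \<in> C\<close> by (rule subsetD)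
      then have "\<Gamma> \<subseteq> X \<and> \<not> LFI3_derives X \<alpha>" by (rule CollectD)
      then have "\<not> LFI3_derives X \<alpha>" by (rule conjunct2)
      ultimately show False by contradiction
    qed
    moreover have "\<Gamma> \<subseteq> \<Union>C"
    proof -
      obtain X where "X \<in> C" using C(1) by blast
      then have "\<Gamma> \<subseteq> X" using CA by auto
      then show ?thesis using \<open>X \<in> C\<close> by auto
    qed
    ultimately show "\<Union>C \<in> ?A" by simp
  qed
  then obtain M where M: "M \<in> ?A" "\<forall>X\<in>?A. M \<subseteq> X \<longrightarrow> X = M" by blast
  show ?thesis
  proof (intro exI[of _ M] conjI allI impI)
    fix \<phi> assume "\<phi> \<notin> M"
    then have "insert \<phi> M \<noteq> M" by auto
    then have "insert \<phi> M \<notin> ?A" using M(2) by auto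
    moreover have "\<Gamma> \<subseteq> insert \<phi> M" using M(1) by auto
    ultimately show "LFI3_derives (insert \<phi> M) \<alpha>" by simp
  qed (use M(1) in simp_all)
qed

section \<open>Maximal sets\<close>

definition maxset :: "fm set \<Rightarrow> bool" where
  "maxset \<Delta> \<longleftrightarrow> (\<forall>\<phi>. LFI3_derives \<Delta> \<phi> \<longrightarrow> \<phi> \<in> \<Delta>) \<and>
     (\<forall>a b. Imp a b \<in> \<Delta> \<longleftrightarrow> (a \<in> \<Delta> \<longrightarrow> b \<in> \<Delta>)) \<and>
     (\<forall>a b. Conj a b \<in> \<Delta> \<longleftrightarrow> (a \<in> \<Delta> \<and> b \<in> \<Delta>)) \<and>
     (\<forall>a b. Disj a b \<in> \<Delta> \<longleftrightarrow> (a \<in> \<Delta> \<or> b \<in> \<Delta>)) \<and>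
     (\<exists>\<beta>. \<beta> \<notin> \<Delta>)"

lemma maxsetI:
  assumes nd: "\<not> LFI3_derives \<Delta> \<alpha>"
    and mx: "\<forall>\<phi>. \<phi> \<notin> \<Delta> \<longrightarrow> LFI3_derives (insert \<phi> \<Delta>) \<alpha>"
  shows "maxset \<Delta>"
proof -
  have cl: "\<phi> \<in> \<Delta>" if "LFI3_derives \<Delta> \<phi>" for \<phi>
  proof (rule ccontr)
    assume "\<phi> \<notin> \<Delta>"
    then have "LFI3_derives \<Delta> (Imp \<phi> \<alpha>)" using mx deduction by blast
    then show False using that nd LFI3_derives.mp by blast
  qed
  have hy: "LFI3_derives \<Delta> \<phi>" if "\<phi> \<in> \<Delta>" for \<phi> using that by (rule LFI3_derives.hyp)
  have notin: "LFI3_derives \<Delta> (Imp \<phi> \<alpha>)" if "\<phi> \<notin> \<Delta>" for \<phi>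
    using that mx deduction by blast
  have prime: "a \<in> \<Delta> \<or> b \<in> \<Delta>" if "Disj a b \<in> \<Delta>" for a b
  proof (rule ccontr)
    assume "\<not> (a \<in> \<Delta> \<or> b \<in> \<Delta>)"
    then have 1: "LFI3_derives \<Delta> (Imp a \<alpha>)" "LFI3_derives \<Delta> (Imp b \<alpha>)" using notin by auto
    have 2: "LFI3_derives \<Delta> (Imp (Imp a \<alpha>) (Imp (Imp b \<alpha>) (Imp (Disj a b) \<alpha>)))"
      by (rule dax, rule mbC_ax.ax8)
    have "LFI3_derives \<Delta> \<alpha>"
      using LFI3_derives.mp[OF hy[OF that] LFI3_derives.mp[OF 1(2) LFI3_derives.mp[OF 1(1) 2]]] .
    then show False using nd by blast
  qed
  have imp: "Imp a b \<in> \<Delta> \<longleftrightarrow> (a \<in> \<Delta> \<longrightarrow> b \<in> \<Delta>)" for a b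
  proof
    assume ab: "Imp a b \<in> \<Delta>"
    show "a \<in> \<Delta> \<longrightarrow> b \<in> \<Delta>"
    proof
      assume "a \<in> \<Delta>"
      then show "b \<in> \<Delta>" by (rule cl[OF LFI3_derives.mp[OF hy hy[OF ab]]])
    qed
  next
    assume h: "a \<in> \<Delta> \<longrightarrow> b \<in> \<Delta>"
    show "Imp a b \<in> \<Delta>"
    proof (cases "a \<in> \<Delta>")
      case True
      then have "b \<in> \<Delta>" using h by blast
      moreover have "LFI3_derives \<Delta> (Imp b (Imp a b))" by (rule dax, rule mbC_ax.ax1)
      ultimately show ?thesis by (rule cl[OF LFI3_derives.mp[OF hy]])
    next
      case False
      have "LFI3_derives \<Delta> (Disj a (Imp a b))" by (rule dax, rule mbC_ax.ax9)
      then have "Disj a (Imp a b) \<in> \<Delta>" by (rule cl)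
      then have "a \<in> \<Delta> \<or> Imp a b \<in> \<Delta>" by (rule prime)
      then show ?thesis using False by (elim disjE) simp_all
    qed
  qed
  have conj: "Conj a b \<in> \<Delta> \<longleftrightarrow> (a \<in> \<Delta> \<and> b \<in> \<Delta>)" for a b
  proof -
    have "Imp a (Imp b (Conj a b)) \<in> \<Delta>" by (rule cl, rule dax, rule mbC_ax.ax3)
    moreover have "Imp (Conj a b) a \<in> \<Delta>" by (rule cl, rule dax, rule mbC_ax.ax4)
    moreover have "Imp (Conj a b) b \<in> \<Delta>" by (rule cl, rule dax, rule mbC_ax.ax5)
    ultimately show ?thesis unfolding imp by blast
  qed
  have disj: "Disj a b \<in> \<Delta> \<longleftrightarrow> (a \<in> \<Delta> \<or> b \<in> \<Delta>)" for a b
  proof -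
    have "Imp a (Disj a b) \<in> \<Delta>" by (rule cl, rule dax, rule mbC_ax.ax6)
    moreover have "Imp b (Disj a b) \<in> \<Delta>" by (rule cl, rule dax, rule mbC_ax.ax7)
    moreover have "Disj a b \<in> \<Delta> \<Longrightarrow> a \<in> \<Delta> \<or> b \<in> \<Delta>" by (rule prime)
    ultimately show ?thesis unfolding imp by blast
  qed
  have "\<alpha> \<notin> \<Delta>" using nd hy by blast
  then show ?thesis unfolding maxset_def imp conj disj using cl by blast
qed

definition hv :: "fm set \<Rightarrow> fm \<Rightarrow> tv" where
  "hv \<Delta> \<phi> = (\<phi> \<in> \<Delta>, Neg \<phi> \<in> \<Delta>, Neg (Circ \<phi>) \<in> \<Delta>)"

context
  fixes \<Delta> assumes m: "maxset \<Delta>"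
begin

lemma m_cl: "LFI3_derives \<Delta> \<phi> \<Longrightarrow> \<phi> \<in> \<Delta>"
proof -
  have "\<forall>\<phi>. LFI3_derives \<Delta> \<phi> \<longrightarrow> \<phi> \<in> \<Delta>" using m unfolding maxset_def by (elim conjE) assumption
  then show "LFI3_derives \<Delta> \<phi> \<Longrightarrow> \<phi> \<in> \<Delta>" by (elim allE impE)
qed
lemma m_imp[simp]: "Imp a b \<in> \<Delta> \<longleftrightarrow> (a \<in> \<Delta> \<longrightarrow> b \<in> \<Delta>)"
proof -
  have "\<forall>a b. Imp a b \<in> \<Delta> \<longleftrightarrow> (a \<in> \<Delta> \<longrightarrow> b \<in> \<Delta>)" using m unfolding maxset_def by (elim conjE) assumption
  then show ?thesis by (elim allE)
qed
lemma m_conj[simp]: "Conj a b \<in> \<Delta> \<longleftrightarrow> (a \<in> \<Delta> \<and> b \<in> \<Delta>)"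
proof -
  have "\<forall>a b. Conj a b \<in> \<Delta> \<longleftrightarrow> (a \<in> \<Delta> \<and> b \<in> \<Delta>)" using m unfolding maxset_def by (elim conjE) assumption
  then show ?thesis by (elim allE)
qed
lemma m_disj[simp]: "Disj a b \<in> \<Delta> \<longleftrightarrow> (a \<in> \<Delta> \<or> b \<in> \<Delta>)"
proof -
  have "\<forall>a b. Disj a b \<in> \<Delta> \<longleftrightarrow> (a \<in> \<Delta> \<or> b \<in> \<Delta>)" using m unfolding maxset_def by (elim conjE) assumption
  then show ?thesis by (elim allE)
qed
lemma m_nontriv: "\<exists>\<beta>. \<beta> \<notin> \<Delta>" using m unfolding maxset_def by (elim conjE) assumption
lemma m_iff[simp]: "Iff a b \<in> \<Delta> \<longleftrightarrow> (a \<in> \<Delta> \<longleftrightarrow> b \<in> \<Delta>)" unfolding Iff_def by auto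
lemma m_ax: "LFI3_ax \<phi> \<Longrightarrow> \<phi> \<in> \<Delta>" by (rule m_cl, rule LFI3_derives.ax)
lemma m_mbc: "mbC_ax \<phi> \<Longrightarrow> \<phi> \<in> \<Delta>" by (rule m_ax, rule LFI3_ax.mbC)
lemma m_excl: "a \<in> \<Delta> \<or> Neg a \<in> \<Delta>"
  using m_mbc[OF mbC_ax.ax10[of a]] by simp
lemma m_nn[simp]: "Neg (Neg a) \<in> \<Delta> \<longleftrightarrow> a \<in> \<Delta>"
  using m_ax[OF LFI3_ax.cf[of a]] m_ax[OF LFI3_ax.ce[of a]] by auto
lemma m_circ[simp]: "Circ a \<in> \<Delta> \<longleftrightarrow> \<not> (a \<in> \<Delta> \<and> Neg a \<in> \<Delta>)"
proof -
  obtain \<beta> where "\<beta> \<notin> \<Delta>" using m_nontriv by (elim exE)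
  then show ?thesis
    using m_mbc[OF mbC_ax.bc1[of a \<beta>]] m_ax[OF LFI3_ax.ciw[of a]] by auto
qed

lemma hv_BB: "hv \<Delta> \<phi> \<in> BB"
  using m_excl[of \<phi>] m_excl[of "Circ \<phi>"] unfolding hv_def BB_def by auto

lemma truth: "eval (\<lambda>n. hv \<Delta> (Var n)) \<phi> = hv \<Delta> \<phi>"
proof (induction \<phi>)
  case (Var n) then show ?case by simp
next
  case (Neg a) then show ?case
    using m_ax[OF LFI3_ax.negcircneg[of a]] by (simp add: hv_def)
next
  case (Circ a) then show ?case
    using m_ax[OF LFI3_ax.ccc[of a]] m_excl[of "Circ a"] m_excl[of "Circ (Circ a)"] m_excl[of a]
    by (cases "a \<in> \<Delta>"; cases "Neg a \<in> \<Delta>"; cases "Neg (Circ a) \<in> \<Delta>"; cases "Neg (Circ (Circ a)) \<in> \<Delta>"; simp add: hv_def)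
next
  case (Conj a b) then show ?case
    using m_ax[OF LFI3_ax.A1[of a b]] m_ax[OF LFI3_ax.A4[of a b]]
      m_excl[of a] m_excl[of b]
    by (simp add: hv_def SNeg_def, (cases "a \<in> \<Delta>"; cases "Neg a \<in> \<Delta>"; cases "Neg (Circ a) \<in> \<Delta>"; cases "b \<in> \<Delta>"; cases "Neg b \<in> \<Delta>"; cases "Neg (Circ b) \<in> \<Delta>"; simp))
next
  case (Disj a b) then show ?case
    using m_ax[OF LFI3_ax.A2[of a b]] m_ax[OF LFI3_ax.A5[of a b]]
      m_excl[of a] m_excl[of b]
    by (simp add: hv_def SNeg_def, (cases "a \<in> \<Delta>"; cases "Neg a \<in> \<Delta>"; cases "Neg (Circ a) \<in> \<Delta>"; cases "b \<in> \<Delta>"; cases "Neg b \<in> \<Delta>"; cases "Neg (Circ b) \<in> \<Delta>"; simp))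
next
  case (Imp a b) then show ?case
    using m_ax[OF LFI3_ax.A3[of a b]] m_ax[OF LFI3_ax.A6[of a b]]
      m_excl[of a] m_excl[of b]
    by (simp add: hv_def SNeg_def, (cases "a \<in> \<Delta>"; cases "Neg a \<in> \<Delta>"; cases "Neg (Circ a) \<in> \<Delta>"; cases "b \<in> \<Delta>"; cases "Neg b \<in> \<Delta>"; cases "Neg (Circ b) \<in> \<Delta>"; simp))
qed

end

lemma completeness:
  assumes ent: "LFI3_entails \<Gamma> \<alpha>" shows "LFI3_derives \<Gamma> \<alpha>"
proof (rule ccontr)
  assume nd: "\<not> LFI3_derives \<Gamma> \<alpha>"
  obtain \<Delta> where D: "\<Gamma> \<subseteq> \<Delta>" "\<not> LFI3_derives \<Delta> \<alpha>"
    "\<forall>\<phi>. \<phi> \<notin> \<Delta> \<longrightarrow> LFI3_derives (insert \<phi> \<Delta>) \<alpha>"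
    using lindenbaum[OF nd] by (elim exE conjE)
  have m: "maxset \<Delta>" by (rule maxsetI[OF D(2) D(3)])
  let ?v = "\<lambda>n. hv \<Delta> (Var n)"
  have vBB: "\<forall>n. ?v n \<in> BB" using hv_BB[OF m] by (intro allI)
  have fh: "eval ?v g \<in> designated \<longleftrightarrow> g \<in> \<Delta>" for g
    unfolding truth[OF m] by (simp add: hv_def designated_def)
  have gd: "\<forall>g\<in>\<Gamma>. eval ?v g \<in> designated"
  proof
    fix g assume "g \<in> \<Gamma>"
    with D(1) have "g \<in> \<Delta>" by (rule subsetD)
    then show "eval ?v g \<in> designated" using fh by (simp only:)
  qed
  have "\<forall>v. (\<forall>n. v n \<in> BB) \<longrightarrow> (\<forall>g\<in>\<Gamma>. eval v g \<in> designated) \<longrightarrow> eval v \<alpha> \<in> designated"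
    using ent unfolding LFI3_entails_def .
  then have "(\<forall>n. ?v n \<in> BB) \<longrightarrow> (\<forall>g\<in>\<Gamma>. eval ?v g \<in> designated) \<longrightarrow> eval ?v \<alpha> \<in> designated"
    by (rule spec)
  then have "eval ?v \<alpha> \<in> designated" using vBB gd by (elim impE)
  then have "\<alpha> \<in> \<Delta>" using fh by (simp only:)
  then have "LFI3_derives \<Delta> \<alpha>" by (rule LFI3_derives.hyp)
  then show False using D(2) by contradiction
qed

theorem theorem16:
  fixes \<Gamma> :: "fm set" and \<alpha> :: fm
  shows "LFI3_derives \<Gamma> \<alpha> \<longleftrightarrow> LFI3_entails \<Gamma> \<alpha>"
  using soundness completeness by blast

end
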